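(* Let $R=k[[x,y]]/(f)$ be a reduced planar curve singularity with normalization $\widetilde R=\bigoplus_{i=1}^{\ell}k[[t_i]]$, and let $M$ be a rank one torsion-free $R$-module. Let $\delta:=\min\{\dim_k M/R\}$, the minimum over all injective $R$-module homomorphisms $R\hookrightarrow M$ (for which $M/R$ is finite-dimensional). If an injective homomorphism $R\hookrightarrow M$ satisfies $\dim_kM/R=\delta$, then (identifying $M$ with a submodule of the total ring of fractions of $R$ via this embedding) $R\subset M\subset\widetilde R$.
   Context: $k$ is an algebraically closed field of characteristic $0$. The total ring of fractions of $R$ is $K=\prod_{i=1}^\ell k((t_i))$; an injection $R\hookrightarrow M$ of a rank one torsion-free module induces $K\cong M\otimes_RK$, identifying $M$ with an $R$-submodule of $K$ containing $R$. *)

theory Defs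
  imports "HOL-Computational_Algebra.Computational_Algebra"
          "HOL-Library.Function_Algebras"
begin

text \<open>Bivariate formal power series F in k[[x,y]] are represented by their coefficient
  functions F i j (coefficient of x^i y^j).  Substitution of x := X, y := Y, where
  X, Y are univariate power series without constant term (a branch parametrization).\<close>

definition bps_subst :: "(nat \<Rightarrow> nat \<Rightarrow> 'a::comm_ring_1) \<Rightarrow> 'a fps \<Rightarrow> 'a fps \<Rightarrow> 'a fps" where
  "bps_subst F X Y = Abs_fps (\<lambda>n. \<Sum>i\<le>n. \<Sum>j\<le>n. F i j * (X ^ i * Y ^ j) $ n)"

text \<open>The branches are indexed by a finite type 'b (so ell = CARD('b)).  The ring
  K = prod_b k((t_b)) is the function ring 'b => 'a fls (pointwise operations).
  The curve ring R = k[[x,y]]/(f) is the image of k[[x,y]] in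
  prod_b k[[t_b]] subset K under the parametrizations (X b, Y b).\<close>

definition curve_ring :: "('b \<Rightarrow> 'a::comm_ring_1 fps) \<Rightarrow> ('b \<Rightarrow> 'a fps) \<Rightarrow> ('b \<Rightarrow> 'a fls) set" where
  "curve_ring X Y = {z. \<exists>F. \<forall>b. z b = fps_to_fls (bps_subst F (X b) (Y b))}"

definition power_series_part :: "('b \<Rightarrow> 'a::comm_ring_1 fls) set" where
  "power_series_part = {z. \<forall>b. \<exists>g. z b = fps_to_fls g}"

definition nonzerodiv :: "('b \<Rightarrow> 'a::field fls) \<Rightarrow> bool" where
  "nonzerodiv z \<longleftrightarrow> (\<forall>b. z b \<noteq> 0)"

definition integral_closure :: "('b \<Rightarrow> 'a::comm_ring_1 fls) set \<Rightarrow> ('b \<Rightarrow> 'a fls) set" where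
  "integral_closure S = {z. \<exists>n>0. \<exists>c::nat \<Rightarrow> ('b \<Rightarrow> 'a fls).
      (\<forall>j<n. c j \<in> S) \<and> z ^ n + (\<Sum>j<n. c j * z ^ j) = 0}"

definition is_total_ring_of_fractions :: "('b \<Rightarrow> 'a::field fls) set \<Rightarrow> bool" where
  "is_total_ring_of_fractions S \<longleftrightarrow>
     (\<forall>z. \<exists>r\<in>S. \<exists>s\<in>S. nonzerodiv s \<and> z * s = r)"

definition fg_submodule :: "('b \<Rightarrow> 'a::comm_ring_1 fls) set \<Rightarrow> ('b \<Rightarrow> 'a fls) set \<Rightarrow> bool" where
  "fg_submodule S M \<longleftrightarrow> (\<exists>N (g::nat \<Rightarrow> ('b \<Rightarrow> 'a fls)).
      M = {\<Sum>i<N. r i * g i | r. \<forall>i<N. r i \<in> S})"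

definition kscale :: "'a::comm_ring_1 \<Rightarrow> ('b \<Rightarrow> 'a fls) \<Rightarrow> ('b \<Rightarrow> 'a fls)" where
  "kscale c z = (\<lambda>b. fls_const c * z b)"

text \<open>quot_dim A B n: for k-subspaces B \<subseteq> A of K, dim_k (A/B) = n.\<close>
definition quot_dim :: "('b \<Rightarrow> 'a::field fls) set \<Rightarrow> ('b \<Rightarrow> 'a fls) set \<Rightarrow> nat \<Rightarrow> bool" where
  "quot_dim A B n \<longleftrightarrow> (\<exists>v::nat \<Rightarrow> ('b \<Rightarrow> 'a fls).
      (\<forall>i<n. v i \<in> A) \<and>
      (\<forall>c. (\<Sum>i<n. kscale (c i) (v i)) \<in> B \<longrightarrow> (\<forall>i<n. c i = 0)) \<and>
      (\<forall>a\<in>A. \<exists>c. a - (\<Sum>i<n. kscale (c i) (v i)) \<in> B))"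

text \<open>The cyclic submodule S*m (image of the homomorphism S -> M, 1 |-> m).\<close>
definition cyclic :: "('b \<Rightarrow> 'a::comm_ring_1 fls) set \<Rightarrow> ('b \<Rightarrow> 'a fls) \<Rightarrow> ('b \<Rightarrow> 'a fls) set" where
  "cyclic S m = {r * m | r. r \<in> S}"

end

theory Submission
  imports Defs
begin

unbundle fps_syntax


lemma kscale_conv: "kscale c z = (\<lambda>b. fls_const c) * (z::'b \<Rightarrow> 'a::field fls)"
  by (auto simp: kscale_def)

global_interpretation KV: vector_space "kscale :: 'a::field \<Rightarrow> ('b \<Rightarrow> 'a fls) \<Rightarrow> _"
  by unfold_locales (auto simp: kscale_def fun_eq_iff algebra_simps fls_plus_const[symmetric])

lemma kscale_mult_left: "kscale c (x * y) = kscale c x * (y::'b \<Rightarrow> 'a::field fls)"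
  by (auto simp: kscale_def fun_eq_iff)
lemma kscale_mult_right: "kscale c (x * y) = x * kscale c (y::'b \<Rightarrow> 'a::field fls)"
  by (auto simp: kscale_def fun_eq_iff)

definition qsI :: "('b \<Rightarrow> 'a::field fls) set \<Rightarrow> ('b \<Rightarrow> 'a fls) set \<Rightarrow> 'i set \<Rightarrow> ('i \<Rightarrow> 'b \<Rightarrow> 'a fls) \<Rightarrow> bool" where
  "qsI A B S v \<longleftrightarrow> finite S \<and> (\<forall>s\<in>S. v s \<in> A) \<and>
     (\<forall>c. (\<Sum>s\<in>S. kscale (c s) (v s)) \<in> B \<longrightarrow> (\<forall>s\<in>S. c s = 0)) \<and>
     (\<forall>a\<in>A. \<exists>c. a - (\<Sum>s\<in>S. kscale (c s) (v s)) \<in> B)"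

lemma qsI_quot_dim:
  fixes A :: "('b \<Rightarrow> 'a::field fls) set"
  assumes "qsI A B S v"
  shows "quot_dim A B (card S)"
proof -
  from assms have fin: "finite S" by (simp add: qsI_def)
  obtain h where h: "bij_betw h {0..<card S} S" using ex_bij_betw_nat_finite[OF fin] by blast
  let ?n = "card S"
  have hl: "{..<?n} = {0..<?n}" by auto
  define h' where "h' = the_inv_into {0..<?n} h"
  have h'h: "h' (h i) = i" if "i < ?n" for i
    unfolding h'_def using h that by (auto simp: bij_betw_def the_inv_into_f_f)
  have hh': "h (h' s) = s" if "s \<in> S" for s
    unfolding h'_def using h that by (auto simp: bij_betw_def f_the_inv_into_f)
  have h'S: "h' s < ?n" if "s \<in> S" for s
    unfolding h'_def using h that by (metis atLeastLessThan_iff bij_betw_def the_inv_into_into subset_refl)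
  have reind: "(\<Sum>i<?n. g (h i)) = (\<Sum>s\<in>S. g s)" for g :: "_ \<Rightarrow> 'b \<Rightarrow> 'a fls"
    using sum.reindex_bij_betw[OF h, of g] hl by simp
  show ?thesis unfolding quot_dim_def
  proof (intro exI[of _ "\<lambda>i. v (h i)"] conjI allI impI ballI)
    fix i assume "i < ?n" thus "v (h i) \<in> A" using assms h by (auto simp: qsI_def bij_betw_def)
  next
    fix c i assume c: "(\<Sum>i<?n. kscale (c i) (v (h i))) \<in> B" and i: "i < ?n"
    have "(\<Sum>i<?n. kscale (c i) (v (h i))) = (\<Sum>i<?n. kscale (c (h' (h i))) (v (h i)))"
      by (rule sum.cong) (auto simp: h'h)
    also have "\<dots> = (\<Sum>s\<in>S. kscale (c (h' s)) (v s))" by (rule reind)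
    finally have "\<forall>s\<in>S. c (h' s) = 0" using assms c by (auto simp: qsI_def)
    moreover have "h i \<in> S" using h i by (auto simp: bij_betw_def)
    ultimately show "c i = 0" using h'h[OF i] by metis
  next
    fix a assume "a \<in> A"
    then obtain c where c: "a - (\<Sum>s\<in>S. kscale (c s) (v s)) \<in> B" using assms by (auto simp: qsI_def)
    have "(\<Sum>s\<in>S. kscale (c s) (v s)) = (\<Sum>i<?n. kscale (c (h i)) (v (h i)))"
      by (rule reind[symmetric])
    thus "\<exists>c. a - (\<Sum>i<?n. kscale (c i) (v (h i))) \<in> B" using c by metis
  qed
qed

lemma quot_dim_qsI:
  fixes A :: "('b \<Rightarrow> 'a::field fls) set"
  assumes "quot_dim A B n" and B0: "0 \<in> B"
  shows "\<exists>T. qsI A B T id \<and> card T = n"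
proof -
  obtain v where v1: "\<forall>i<n. v i \<in> A"
    and v2: "\<forall>c. (\<Sum>i<n. kscale (c i) (v i)) \<in> B \<longrightarrow> (\<forall>i<n. c i = 0)"
    and v3: "\<forall>a\<in>A. \<exists>c. a - (\<Sum>i<n. kscale (c i) (v i)) \<in> B"
    using assms unfolding quot_dim_def by blast
  have inj: "inj_on v {..<n}"
  proof (rule inj_onI, rule ccontr)
    fix i j assume i: "i \<in> {..<n}" and j: "j \<in> {..<n}" and e: "v i = v j" and ne: "i \<noteq> j"
    define c where "c = (\<lambda>k. if k = i then (1::'a) else if k = j then -1 else 0)"
    have "(\<Sum>k<n. kscale (c k) (v k)) = (\<Sum>k\<in>{i,j}. kscale (c k) (v k))"
      by (rule sum.mono_neutral_right) (use i j in \<open>auto simp: c_def KV.scale_zero_left\<close>)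
    also have "\<dots> = 0" using ne e by (simp add: c_def KV.scale_minus_left)
    finally have "c i = 0" using v2 B0 i by auto
    thus False by (simp add: c_def)
  qed
  let ?T = "v ` {..<n}"
  have reind: "(\<Sum>t\<in>?T. g t) = (\<Sum>i<n. g (v i))" for g :: "_ \<Rightarrow> 'b \<Rightarrow> 'a fls"
    using sum.reindex[OF inj, of g] by simp
  have "qsI A B ?T id" unfolding qsI_def
  proof (intro conjI allI impI ballI)
    show "finite ?T" by simp
  next
    fix s assume "s \<in> ?T" thus "id s \<in> A" using v1 by auto
  next
    fix c s assume c: "(\<Sum>s\<in>?T. kscale (c s) (id s)) \<in> B" and s: "s \<in> ?T"
    have "(\<Sum>i<n. kscale (c (v i)) (v i)) \<in> B" using c reind[of "\<lambda>t. kscale (c t) t"] by simp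
    hence "\<forall>i<n. c (v i) = 0" using v2[rule_format, of "\<lambda>i. c (v i)"] by blast
    thus "c s = 0" using s by auto
  next
    fix a assume "a \<in> A"
    then obtain c where c: "a - (\<Sum>i<n. kscale (c i) (v i)) \<in> B" using v3 by blast
    define c' where "c' = (\<lambda>t. c (the_inv_into {..<n} v t))"
    have "(\<Sum>s\<in>?T. kscale (c' s) (id s)) = (\<Sum>i<n. kscale (c' (v i)) (v i))" using reind by simp
    also have "\<dots> = (\<Sum>i<n. kscale (c i) (v i))"
      by (rule sum.cong) (auto simp: c'_def the_inv_into_f_f[OF inj])
    finally show "\<exists>c. a - (\<Sum>s\<in>?T. kscale (c s) (id s)) \<in> B" using c by metis
  qed
  moreover have "card ?T = n" using card_image[OF inj] by simp
  ultimately show ?thesis by blast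
qed

lemma qsI_id_subset: "qsI A B T id \<Longrightarrow> T \<subseteq> A"
  by (auto simp: qsI_def)

lemma qs_compose:
  fixes A :: "('b \<Rightarrow> 'a::field fls) set"
  assumes sB: "KV.subspace B" and CB: "C \<subseteq> B" and BA: "B \<subseteq> A"
    and q1: "qsI A B T1 id" and q2: "qsI B C T2 id"
  shows "qsI A C (T1 \<union> T2) id \<and> T1 \<inter> T2 = {}"
proof -
  have f1: "finite T1" and f2: "finite T2" using q1 q2 by (auto simp: qsI_def)
  have T2B: "T2 \<subseteq> B" using q2 by (auto simp: qsI_def)
  have i1: "\<And>c. (\<Sum>s\<in>T1. kscale (c s) s) \<in> B \<Longrightarrow> \<forall>s\<in>T1. c s = 0" using q1 by (auto simp: qsI_def)
  have i2: "\<And>c. (\<Sum>s\<in>T2. kscale (c s) s) \<in> C \<Longrightarrow> \<forall>s\<in>T2. c s = 0" using q2 by (auto simp: qsI_def)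
  have sumB: "(\<Sum>s\<in>T2. kscale (c s) s) \<in> B" for c
    by (rule KV.subspace_sum[OF sB]) (use T2B sB in \<open>auto intro: KV.subspace_scale\<close>)
  have disj: "T1 \<inter> T2 = {}"
  proof (rule ccontr)
    assume "T1 \<inter> T2 \<noteq> {}" then obtain t where t: "t \<in> T1" "t \<in> T2" by blast
    define c where "c = (\<lambda>s. if s = t then (1::'a) else 0)"
    have "(\<Sum>s\<in>T1. kscale (c s) s) = (\<Sum>s\<in>T1. if s = t then t else 0)"
      by (rule sum.cong) (auto simp: c_def KV.scale_zero_left)
    also have "\<dots> = t" using t f1 by simp
    finally have "(\<Sum>s\<in>T1. kscale (c s) s) \<in> B" using t T2B by auto
    hence "c t = 0" using i1 t by blast
    thus False by (simp add: c_def)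
  qed
  have split: "(\<Sum>s\<in>T1 \<union> T2. g s) = (\<Sum>s\<in>T1. g s) + (\<Sum>s\<in>T2. g s)" for g :: "_ \<Rightarrow> 'b \<Rightarrow> 'a fls"
    by (rule sum.union_disjoint) (use f1 f2 disj in auto)
  have "qsI A C (T1 \<union> T2) id" unfolding qsI_def
  proof (intro conjI allI impI ballI)
    show "finite (T1 \<union> T2)" using f1 f2 by auto
  next
    fix s assume "s \<in> T1 \<union> T2" thus "id s \<in> A" using q1 T2B BA by (auto simp: qsI_def)
  next
    fix c s assume c: "(\<Sum>s\<in>T1 \<union> T2. kscale (c s) (id s)) \<in> C" and s: "s \<in> T1 \<union> T2"
    let ?S1 = "(\<Sum>s\<in>T1. kscale (c s) s)" and ?S2 = "(\<Sum>s\<in>T2. kscale (c s) s)"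
    have e: "?S1 + ?S2 \<in> C" using c split[of "\<lambda>s. kscale (c s) s"] by simp
    have "?S1 + ?S2 - ?S2 \<in> B" using e CB sumB KV.subspace_diff[OF sB] by blast
    hence "?S1 \<in> B" by simp
    hence c1: "\<forall>s\<in>T1. c s = 0" by (rule i1)
    have "?S1 = 0" using c1 by (auto intro!: sum.neutral simp: KV.scale_zero_left)
    hence "?S2 \<in> C" using e by simp
    hence "\<forall>s\<in>T2. c s = 0" by (rule i2)
    thus "c s = 0" using c1 s by auto
  next
    fix a assume a: "a \<in> A"
    then obtain c1 where c1: "a - (\<Sum>s\<in>T1. kscale (c1 s) s) \<in> B" using q1 by (auto simp: qsI_def)
    then obtain c2 where c2: "a - (\<Sum>s\<in>T1. kscale (c1 s) s) - (\<Sum>s\<in>T2. kscale (c2 s) s) \<in> C"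
      using q2 by (auto simp: qsI_def)
    define c where "c = (\<lambda>s. if s \<in> T1 then c1 s else c2 s)"
    have e1: "(\<Sum>s\<in>T1. kscale (c s) s) = (\<Sum>s\<in>T1. kscale (c1 s) s)"
      by (rule sum.cong) (auto simp: c_def)
    have e2: "(\<Sum>s\<in>T2. kscale (c s) s) = (\<Sum>s\<in>T2. kscale (c2 s) s)"
      by (rule sum.cong) (use disj in \<open>auto simp: c_def\<close>)
    have "(\<Sum>s\<in>T1 \<union> T2. kscale (c s) (id s)) = (\<Sum>s\<in>T1. kscale (c1 s) s) + (\<Sum>s\<in>T2. kscale (c2 s) s)"
      using split[of "\<lambda>s. kscale (c s) s"] e1 e2 by simp
    hence "a - (\<Sum>s\<in>T1 \<union> T2. kscale (c s) (id s)) = a - (\<Sum>s\<in>T1. kscale (c1 s) s) - (\<Sum>s\<in>T2. kscale (c2 s) s)"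
      by (simp add: diff_diff_eq)
    thus "\<exists>c. a - (\<Sum>s\<in>T1 \<union> T2. kscale (c s) (id s)) \<in> C" using c2 by metis
  qed
  thus ?thesis using disj by blast
qed

lemma qs_card_le:
  fixes A :: "('b \<Rightarrow> 'a::field fls) set"
  assumes sB: "KV.subspace B" and q: "qsI A B T id" and q': "qsI A B T' id"
  shows "card T \<le> card T'"
proof -
  have f: "finite T" and f': "finite T'" using q q' by (auto simp: qsI_def)
  have "\<forall>t\<in>T. \<exists>c. t - (\<Sum>s\<in>T'. kscale (c s) s) \<in> B" using q q' by (auto simp: qsI_def)
  then obtain cc where cc: "\<And>t. t \<in> T \<Longrightarrow> t - (\<Sum>s\<in>T'. kscale (cc t s) s) \<in> B" by metis
  define \<sigma> where "\<sigma> t = (\<Sum>s\<in>T'. kscale (cc t s) s)" for t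
  have iT: "\<And>c. (\<Sum>s\<in>T. kscale (c s) s) \<in> B \<Longrightarrow> \<forall>s\<in>T. c s = 0" using q by (auto simp: qsI_def)
  have key: "(\<Sum>t\<in>T. kscale (c t) t) - (\<Sum>t\<in>T. kscale (c t) (\<sigma> t)) \<in> B" for c
  proof -
    have "(\<Sum>t\<in>T. kscale (c t) t) - (\<Sum>t\<in>T. kscale (c t) (\<sigma> t)) = (\<Sum>t\<in>T. kscale (c t) (t - \<sigma> t))"
      by (simp add: sum_subtractf KV.scale_right_diff_distrib)
    also have "\<dots> \<in> B" by (rule KV.subspace_sum[OF sB]) (use cc sB in \<open>auto simp: \<sigma>_def intro: KV.subspace_scale\<close>)
    finally show ?thesis .
  qed
  have inj: "inj_on \<sigma> T"
  proof (rule inj_onI, rule ccontr)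
    fix t1 t2 assume t1: "t1 \<in> T" and t2: "t2 \<in> T" and e: "\<sigma> t1 = \<sigma> t2" and ne: "t1 \<noteq> t2"
    define c where "c = (\<lambda>k. if k = t1 then (1::'a) else if k = t2 then -1 else 0)"
    have z: "(\<Sum>t\<in>T. kscale (c t) (g t)) = (\<Sum>t\<in>{t1,t2}. kscale (c t) (g t))" for g :: "_ \<Rightarrow> 'b \<Rightarrow> 'a fls"
      by (rule sum.mono_neutral_right) (use t1 t2 f in \<open>auto simp: c_def KV.scale_zero_left\<close>)
    have "(\<Sum>t\<in>T. kscale (c t) (\<sigma> t)) = 0" using z[of \<sigma>] ne e by (simp add: c_def KV.scale_minus_left)
    hence "(\<Sum>t\<in>T. kscale (c t) t) \<in> B" using key[of c] by simp
    hence "c t1 = 0" using iT t1 by blast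
    thus False by (simp add: c_def)
  qed
  have sp: "\<sigma> ` T \<subseteq> KV.span T'"
    unfolding \<sigma>_def by (auto intro!: KV.span_sum KV.span_scale intro: KV.span_base)
  have ind: "KV.independent (\<sigma> ` T)"
  proof (rule KV.independent_if_scalars_zero)
    show "finite (\<sigma> ` T)" using f by simp
  next
    fix u x assume u: "(\<Sum>v\<in>\<sigma> ` T. kscale (u v) v) = 0" and x: "x \<in> \<sigma> ` T"
    have "(\<Sum>t\<in>T. kscale (u (\<sigma> t)) (\<sigma> t)) = 0" using u sum.reindex[OF inj, of "\<lambda>v. kscale (u v) v"] by simp
    hence "(\<Sum>t\<in>T. kscale (u (\<sigma> t)) t) \<in> B" using key[of "\<lambda>t. u (\<sigma> t)"] by simp
    hence "\<forall>t\<in>T. u (\<sigma> t) = 0" using iT[of "\<lambda>t. u (\<sigma> t)"] by blast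
    thus "u x = 0" using x by auto
  qed
  have "card (\<sigma> ` T) \<le> card T'" using KV.independent_span_bound[OF f' ind sp] by simp
  thus ?thesis using card_image[OF inj] by simp
qed

lemma qs_card_eq:
  fixes A :: "('b \<Rightarrow> 'a::field fls) set"
  assumes sB: "KV.subspace B" and q: "qsI A B T id" and q': "qsI A B T' id"
  shows "card T = card T'"
  using qs_card_le[OF sB q q'] qs_card_le[OF sB q' q] by simp

lemma quot_dim_unique:
  fixes A :: "('b \<Rightarrow> 'a::field fls) set"
  assumes sB: "KV.subspace B" and q: "quot_dim A B n" and q': "quot_dim A B n'"
  shows "n = n'"
proof -
  have B0: "0 \<in> B" using sB by (simp add: KV.subspace_0)
  obtain T T' where "qsI A B T id" "card T = n" "qsI A B T' id" "card T' = n'"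
    using quot_dim_qsI[OF q B0] quot_dim_qsI[OF q' B0] by blast
  thus ?thesis using qs_card_eq[OF sB] by metis
qed

lemma quot_basis:
  fixes Q :: "('b \<Rightarrow> 'a::field fls) set"
  assumes sP: "KV.subspace P" and PQ: "P \<subseteq> Q" and fS: "finite S" and QS: "Q \<subseteq> KV.span S"
  shows "\<exists>U. qsI Q P U id"
proof -
  obtain BP where BP: "BP \<subseteq> P" "KV.independent BP" "P \<subseteq> KV.span BP"
    using KV.maximal_independent_subset by blast
  obtain BQ where BQ: "BP \<subseteq> BQ" "BQ \<subseteq> Q" "KV.independent BQ" "Q \<subseteq> KV.span BQ"
    using KV.maximal_independent_subset_extend[of BP Q] BP PQ by blast
  have fBQ: "finite BQ" using KV.independent_span_bound[OF fS BQ(3)] BQ(2) QS by blast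
  have fBP: "finite BP" using fBQ BQ(1) finite_subset by blast
  define U where "U = BQ - BP"
  have fU: "finite U" using fBQ by (simp add: U_def)
  have spP: "KV.span BP \<subseteq> P" using BP(1) sP by (simp add: KV.span_minimal)
  have split: "(\<Sum>v\<in>BQ. g v) = (\<Sum>v\<in>U. g v) + (\<Sum>v\<in>BP. g v)" for g :: "_ \<Rightarrow> 'b \<Rightarrow> 'a fls"
  proof -
    show ?thesis by (simp add: sum.subset_diff[OF BQ(1) fBQ] U_def)
  qed
  have "qsI Q P U id" unfolding qsI_def
  proof (intro conjI allI impI ballI)
    show "finite U" by fact
  next
    fix s assume "s \<in> U" thus "id s \<in> Q" using BQ by (auto simp: U_def)
  next
    fix c s assume c: "(\<Sum>s\<in>U. kscale (c s) (id s)) \<in> P" and s: "s \<in> U"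
    hence "(\<Sum>s\<in>U. kscale (c s) s) \<in> KV.span BP" using BP(3) by auto
    then obtain d where d: "(\<Sum>v\<in>BP. kscale (d v) v) = (\<Sum>s\<in>U. kscale (c s) s)"
      using KV.span_finite[OF fBP] by auto
    define e where "e = (\<lambda>v. if v \<in> U then c v else - d v)"
    have "(\<Sum>v\<in>BQ. kscale (e v) v) = (\<Sum>v\<in>U. kscale (c v) v) + (\<Sum>v\<in>BP. kscale (- d v) v)"
      unfolding split by (auto simp: e_def U_def intro!: sum.cong arg_cong2[where f="(+)"])
    also have "\<dots> = 0" using d by (simp add: KV.scale_minus_left sum_negf)
    finally have "\<forall>v\<in>BQ. e v = 0" using KV.independentD[OF BQ(3) fBQ subset_refl] by blast
    thus "c s = 0" using s by (auto simp: e_def U_def)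
  next
    fix q assume "q \<in> Q"
    hence "q \<in> KV.span BQ" using BQ by auto
    then obtain e where e: "q = (\<Sum>v\<in>BQ. kscale (e v) v)" using KV.span_finite[OF fBQ] by auto
    have "q - (\<Sum>s\<in>U. kscale (e s) (id s)) = (\<Sum>v\<in>BP. kscale (e v) v)" using e split by simp
    also have "\<dots> \<in> KV.span BP" by (rule KV.span_sum) (auto intro: KV.span_scale KV.span_base)
    also have "\<dots> \<subseteq> P" by (rule spP)
    finally show "\<exists>c. q - (\<Sum>s\<in>U. kscale (c s) (id s)) \<in> P" by blast
  qed
  thus ?thesis by blast
qed

lemma qs_split:
  fixes A :: "('b \<Rightarrow> 'a::field fls) set"
  assumes sA: "KV.subspace A" and sB: "KV.subspace B" and sC: "KV.subspace C"
    and CB: "C \<subseteq> B" and BA: "B \<subseteq> A" and q: "qsI A C T id"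
  shows "\<exists>T1 T2. qsI A B T1 id \<and> qsI B C T2 id"
proof -
  let ?V = "KV.span T"
  have fT: "finite T" and TA: "T \<subseteq> A" using q by (auto simp: qsI_def)
  have VA: "?V \<subseteq> A" using TA sA by (simp add: KV.span_minimal)
  have sV: "KV.subspace ?V" by simp
  have repr: "\<exists>s\<in>?V. a - s \<in> C" if aA: "a \<in> A" for a
  proof -
    obtain c where "a - (\<Sum>s\<in>T. kscale (c s) s) \<in> C" using q aA unfolding qsI_def by auto
    moreover have "(\<Sum>s\<in>T. kscale (c s) s) \<in> ?V" by (rule KV.span_sum) (auto intro: KV.span_scale KV.span_base)
    ultimately show ?thesis by blast
  qed
  obtain U1 where U1: "qsI ?V (?V \<inter> B) U1 id"
    using quot_basis[of "?V \<inter> B" ?V T] KV.subspace_inter[OF sV sB] fT by auto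
  obtain U2 where U2: "qsI (?V \<inter> B) (?V \<inter> C) U2 id"
    using quot_basis[of "?V \<inter> C" "?V \<inter> B" T] KV.subspace_inter[OF sV sC] CB fT by auto
  have "qsI A B U1 id" unfolding qsI_def
  proof (intro conjI allI impI ballI)
    show "finite U1" using U1 by (simp add: qsI_def)
  next
    fix s assume "s \<in> U1" thus "id s \<in> A" using U1 VA by (auto simp: qsI_def)
  next
    fix c s assume c: "(\<Sum>s\<in>U1. kscale (c s) (id s)) \<in> B" and s: "s \<in> U1"
    have "(\<Sum>s\<in>U1. kscale (c s) (id s)) \<in> ?V"
      using U1 by (auto simp: qsI_def intro!: KV.span_sum KV.span_scale)
    thus "c s = 0" using c s U1 unfolding qsI_def by blast
  next
    fix a assume "a \<in> A"
    then obtain s where s: "s \<in> ?V" "a - s \<in> C" using repr by blast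
    then obtain c where c: "s - (\<Sum>u\<in>U1. kscale (c u) (id u)) \<in> ?V \<inter> B" using U1 unfolding qsI_def by blast
    have "a - (\<Sum>u\<in>U1. kscale (c u) (id u)) = (a - s) + (s - (\<Sum>u\<in>U1. kscale (c u) (id u)))" by simp
    also have "\<dots> \<in> B" using s(2) c CB KV.subspace_add[OF sB] by blast
    finally show "\<exists>c. a - (\<Sum>u\<in>U1. kscale (c u) (id u)) \<in> B" by blast
  qed
  moreover have "qsI B C U2 id" unfolding qsI_def
  proof (intro conjI allI impI ballI)
    show "finite U2" using U2 by (simp add: qsI_def)
  next
    fix s assume "s \<in> U2" thus "id s \<in> B" using U2 by (auto simp: qsI_def)
  next
    fix c s assume c: "(\<Sum>s\<in>U2. kscale (c s) (id s)) \<in> C" and s: "s \<in> U2"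
    have "(\<Sum>s\<in>U2. kscale (c s) (id s)) \<in> ?V"
      using U2 by (auto simp: qsI_def intro!: KV.span_sum KV.span_scale)
    thus "c s = 0" using c s U2 unfolding qsI_def by blast
  next
    fix b assume b: "b \<in> B"
    then obtain s where s: "s \<in> ?V" "b - s \<in> C" using repr BA by blast
    have "s = b - (b - s)" by simp
    hence "s \<in> B" using b s(2) CB KV.subspace_diff[OF sB] by (metis subsetD)
    hence "s \<in> ?V \<inter> B" using s(1) by blast
    then obtain c where c: "s - (\<Sum>u\<in>U2. kscale (c u) (id u)) \<in> ?V \<inter> C" using U2 unfolding qsI_def by blast
    have "b - (\<Sum>u\<in>U2. kscale (c u) (id u)) = (b - s) + (s - (\<Sum>u\<in>U2. kscale (c u) (id u)))" by simp
    also have "\<dots> \<in> C" using s(2) c KV.subspace_add[OF sC] by blast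
    finally show "\<exists>c. b - (\<Sum>u\<in>U2. kscale (c u) (id u)) \<in> C" by blast
  qed
  ultimately show ?thesis by blast
qed

lemma quot_dim_mult:
  fixes A :: "('b \<Rightarrow> 'a::field fls) set"
  assumes ww: "w * w' = 1" and q: "quot_dim A B n"
  shows "quot_dim ((\<lambda>a. w * a) ` A) ((\<lambda>a. w * a) ` B) n"
proof -
  obtain v where v1: "\<forall>i<n. v i \<in> A"
    and v2: "\<forall>c. (\<Sum>i<n. kscale (c i) (v i)) \<in> B \<longrightarrow> (\<forall>i<n. c i = 0)"
    and v3: "\<forall>a\<in>A. \<exists>c. a - (\<Sum>i<n. kscale (c i) (v i)) \<in> B"
    using q unfolding quot_dim_def by blast
  have lin: "(\<Sum>i<n. kscale (c i) (w * v i)) = w * (\<Sum>i<n. kscale (c i) (v i))" for c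
    by (simp add: sum_distrib_left kscale_mult_right)
  have canc: "w' * (w * x) = x" for x using ww by (simp add: mult.assoc[symmetric] mult.commute)
  show ?thesis unfolding quot_dim_def
  proof (intro exI[of _ "\<lambda>i. w * v i"] conjI allI impI ballI)
    fix i assume "i < n" thus "w * v i \<in> (*) w ` A" using v1 by auto
  next
    fix c i assume c: "(\<Sum>i<n. kscale (c i) (w * v i)) \<in> (*) w ` B" and i: "i < n"
    then obtain b where b: "b \<in> B" "w * (\<Sum>i<n. kscale (c i) (v i)) = w * b" unfolding lin by auto
    hence "(\<Sum>i<n. kscale (c i) (v i)) = b" using canc by metis
    thus "c i = 0" using v2 b i by auto
  next
    fix a assume "a \<in> (*) w ` A"
    then obtain a0 where a0: "a0 \<in> A" "a = w * a0" by auto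
    then obtain c where c: "a0 - (\<Sum>i<n. kscale (c i) (v i)) \<in> B" using v3 by blast
    have "a - (\<Sum>i<n. kscale (c i) (w * v i)) = w * (a0 - (\<Sum>i<n. kscale (c i) (v i)))"
      using a0 by (simp add: lin right_diff_distrib)
    thus "\<exists>c. a - (\<Sum>i<n. kscale (c i) (w * v i)) \<in> (*) w ` B" using c by blast
  qed
qed



definition ev :: "'a::comm_ring_1 fps fps \<Rightarrow> 'a fps \<Rightarrow> 'a fps \<Rightarrow> 'a fps" where
  "ev F X Y = bps_subst (\<lambda>i j. F$i$j) X Y"

definition eqn :: "nat \<Rightarrow> 'a::comm_ring_1 fps \<Rightarrow> 'a fps \<Rightarrow> bool" where
  "eqn n f g \<longleftrightarrow> (\<forall>m\<le>n. f$m = g$m)"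

definition Pn :: "nat \<Rightarrow> 'a::comm_ring_1 fps \<Rightarrow> 'a fps \<Rightarrow> 'a fps" where
  "Pn n Y f = (\<Sum>j\<le>n. fps_const (f$j) * Y^j)"

definition Qn :: "nat \<Rightarrow> 'a::comm_ring_1 fps \<Rightarrow> 'a fps \<Rightarrow> 'a fps fps \<Rightarrow> 'a fps" where
  "Qn n X Y F = (\<Sum>i\<le>n. Pn n Y (F$i) * X^i)"

lemma eqn_refl[simp]: "eqn n f f" by (simp add: eqn_def)
lemma eqn_sym: "eqn n f g \<Longrightarrow> eqn n g f" by (simp add: eqn_def)
lemma eqn_trans: "eqn n f g \<Longrightarrow> eqn n g h \<Longrightarrow> eqn n f h" by (simp add: eqn_def)
lemma eqn_add: "eqn n f f' \<Longrightarrow> eqn n g g' \<Longrightarrow> eqn n (f + g) (f' + g')" by (simp add: eqn_def)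
lemma eqn_mult: "eqn n f f' \<Longrightarrow> eqn n g g' \<Longrightarrow> eqn n (f * g) (f' * g')"
  unfolding eqn_def fps_mult_nth by (auto intro!: sum.cong)
lemma eqn_sum: "(\<And>i. i \<in> S \<Longrightarrow> eqn n (f i) (g i)) \<Longrightarrow> eqn n (sum f S) (sum g S)"
  unfolding eqn_def fps_sum_nth by (auto intro!: sum.cong)
lemma eqn_all: "(\<And>n. eqn n f g) \<Longrightarrow> f = g"
  by (auto simp: eqn_def intro!: fps_ext)

lemma vanish:
  fixes Z :: "'a::comm_ring_1 fps"
  assumes "Z$0 = 0" "m < k"
  shows "(c * Z^k)$m = 0"
proof -
  have "Z = fps_shift 1 Z * fps_X"
    by (rule fps_ext) (use assms in \<open>auto simp: fps_X_mult_right_nth\<close>)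
  hence "c * Z^k = (c * (fps_shift 1 Z)^k) * fps_X^k"
    by (metis (no_types, lifting) mult.assoc power_mult_distrib)
  thus ?thesis using assms by (simp add: fps_X_power_mult_right_nth)
qed

lemma L1D:
  fixes Z :: "'a::comm_ring_1 fps"
  assumes Z0: "Z$0 = 0"
  shows "eqn n ((\<Sum>i\<le>n. A i * Z^i) * (\<Sum>i\<le>n. B i * Z^i)) (\<Sum>p\<le>n. (\<Sum>a\<le>p. A a * B (p-a)) * Z^p)"
proof -
  let ?g = "\<lambda>a a'. A a * B a' * Z^(a+a')"
  have l: "(\<Sum>i\<le>n. A i * Z^i) * (\<Sum>i\<le>n. B i * Z^i) = (\<Sum>(a,a')\<in>{..n}\<times>{..n}. ?g a a')"
    by (simp add: sum_product sum.cartesian_product power_add algebra_simps)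
  have r: "(\<Sum>p\<le>n. (\<Sum>a\<le>p. A a * B (p-a)) * Z^p) = (\<Sum>(a,a')\<in>{(i,j). i+j \<le> n}. ?g a a')"
    by (subst sum.triangle_reindex_eq) (auto simp: sum_distrib_right intro!: sum.cong)
  show ?thesis unfolding eqn_def l r
  proof (intro allI impI)
    fix m assume m: "m \<le> n"
    have "(\<Sum>(a,a')\<in>{..n}\<times>{..n}. ?g a a') $ m = (\<Sum>(a,a')\<in>{..n}\<times>{..n}. ?g a a' $ m)"
      by (simp add: fps_sum_nth case_prod_beta)
    also have "\<dots> = (\<Sum>(a,a')\<in>{(i,j). i+j \<le> n}. ?g a a' $ m)"
    proof (rule sum.mono_neutral_right)
      show "finite ({..n}\<times>{..n})" by simp
      show "{(i,j). i+j \<le> n} \<subseteq> {..n}\<times>{..n}" by auto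
      show "\<forall>i\<in>{..n}\<times>{..n} - {(i,j). i+j \<le> n}. (case i of (a, a') \<Rightarrow> ?g a a' $ m) = 0"
        using m by (auto intro!: vanish[OF Z0])
    qed
    also have "\<dots> = (\<Sum>(a,a')\<in>{(i,j). i+j \<le> n}. ?g a a') $ m"
      by (simp add: fps_sum_nth case_prod_beta)
    finally show "(\<Sum>(a,a')\<in>{..n}\<times>{..n}. ?g a a') $ m = (\<Sum>(a,a')\<in>{(i,j). i+j \<le> n}. ?g a a') $ m" .
  qed
qed

lemma XY_vanish:
  fixes X Y :: "'a::comm_ring_1 fps"
  assumes "X$0 = 0" "Y$0 = 0" "m < i \<or> m < j"
  shows "(X^i * Y^j)$m = 0"
  using assms vanish[of X m i "Y^j"] vanish[of Y m j "X^i"] by (auto simp: mult.commute)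

lemma ev_nth: "ev F X Y $ m = (\<Sum>i\<le>m. \<Sum>j\<le>m. F$i$j * (X^i * Y^j)$m)"
  by (simp add: ev_def bps_subst_def)

lemma box_extend:
  fixes h :: "nat \<Rightarrow> nat \<Rightarrow> 'a::comm_monoid_add"
  assumes "m \<le> n" "\<And>i j. m < i \<or> m < j \<Longrightarrow> h i j = 0"
  shows "(\<Sum>i\<le>n. \<Sum>j\<le>n. h i j) = (\<Sum>i\<le>m. \<Sum>j\<le>m. h i j)"
proof -
  have "(\<Sum>i\<le>n. \<Sum>j\<le>n. h i j) = (\<Sum>i\<le>n. \<Sum>j\<le>m. h i j)"
    by (rule sum.cong[OF refl], rule sum.mono_neutral_right) (use assms in auto)
  also have "\<dots> = (\<Sum>i\<le>m. \<Sum>j\<le>m. h i j)"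
    by (rule sum.mono_neutral_right) (use assms in \<open>auto intro!: sum.neutral\<close>)
  finally show ?thesis .
qed

lemma ev_Qn:
  fixes X Y :: "'a::comm_ring_1 fps"
  assumes X0: "X$0 = 0" and Y0: "Y$0 = 0"
  shows "eqn n (ev F X Y) (Qn n X Y F)"
  unfolding eqn_def
proof (intro allI impI)
  fix m assume m: "m \<le> n"
  have "Qn n X Y F $ m = (\<Sum>i\<le>n. \<Sum>j\<le>n. F$i$j * (X^i * Y^j)$m)"
  proof -
    have e: "(fps_const (F$i$j) * Y^j * X^i) $ m = F$i$j * (X^i*Y^j)$m" for i j
    proof -
      have eq: "fps_const (F$i$j) * Y^j * X^i = fps_const (F$i$j) * (X^i*Y^j)" by (simp add: algebra_simps)
      show ?thesis unfolding eq by (rule fps_mult_left_const_nth)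
    qed
    show ?thesis unfolding Qn_def Pn_def fps_sum_nth sum_distrib_right e ..
  qed
  also have "\<dots> = (\<Sum>i\<le>m. \<Sum>j\<le>m. F$i$j * (X^i * Y^j)$m)"
    by (rule box_extend[OF m]) (simp add: XY_vanish[OF X0 Y0])
  finally show "ev F X Y $ m = Qn n X Y F $ m" by (simp add: ev_nth)
qed

lemma Pn_add: "Pn n Y (f + g) = Pn n Y f + Pn n Y g"
  by (simp add: Pn_def sum.distrib algebra_simps flip: fps_const_add)

lemma Pn_0[simp]: "Pn n Y 0 = 0" by (simp add: Pn_def)

lemma fps_const_sum': "finite S \<Longrightarrow> fps_const (\<Sum>a\<in>S. f a) = (\<Sum>a\<in>S. fps_const (f a))"
  by (induction S rule: finite_induct) (auto simp flip: fps_const_add)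

lemma Pn_sum: "finite S \<Longrightarrow> Pn n Y (\<Sum>a\<in>S. f a) = (\<Sum>a\<in>S. Pn n Y (f a))"
  by (induction S rule: finite_induct) (simp_all add: Pn_add)

lemma Pn_mult:
  fixes Y :: "'a::comm_ring_1 fps"
  assumes Y0: "Y$0 = 0"
  shows "eqn n (Pn n Y f * Pn n Y g) (Pn n Y (f * g))"
proof -
  have "eqn n (Pn n Y f * Pn n Y g) (\<Sum>p\<le>n. (\<Sum>a\<le>p. fps_const (f$a) * fps_const (g$(p-a))) * Y^p)"
    unfolding Pn_def by (rule L1D[OF Y0])
  also have "(\<Sum>p\<le>n. (\<Sum>a\<le>p. fps_const (f$a) * fps_const (g$(p-a))) * Y^p) = Pn n Y (f * g)"
    unfolding Pn_def fps_mult_nth atLeast0AtMost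
    by (intro sum.cong refl) (simp add: fps_const_sum')
  finally show ?thesis .
qed

lemma Qn_mult:
  fixes X Y :: "'a::comm_ring_1 fps"
  assumes X0: "X$0 = 0" and Y0: "Y$0 = 0"
  shows "eqn n (Qn n X Y F * Qn n X Y G) (Qn n X Y (F * G))"
proof -
  have "eqn n (Qn n X Y F * Qn n X Y G) (\<Sum>p\<le>n. (\<Sum>a\<le>p. Pn n Y (F$a) * Pn n Y (G$(p-a))) * X^p)"
    unfolding Qn_def by (rule L1D[OF X0])
  moreover have "eqn n (\<Sum>p\<le>n. (\<Sum>a\<le>p. Pn n Y (F$a) * Pn n Y (G$(p-a))) * X^p) (Qn n X Y (F * G))"
    unfolding Qn_def
  proof (rule eqn_sum, rule eqn_mult[OF _ eqn_refl])
    fix p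
    have "eqn n (\<Sum>a\<le>p. Pn n Y (F$a) * Pn n Y (G$(p-a))) (\<Sum>a\<le>p. Pn n Y (F$a * G$(p-a)))"
      by (rule eqn_sum) (rule Pn_mult[OF Y0])
    also have "(\<Sum>a\<le>p. Pn n Y (F$a * G$(p-a))) = Pn n Y ((F*G)$p)"
      by (simp add: fps_mult_nth atLeast0AtMost Pn_sum)
    finally show "eqn n (\<Sum>a\<le>p. Pn n Y (F $ a) * Pn n Y (G $ (p - a))) (Pn n Y ((F * G) $ p))" .
  qed
  ultimately show ?thesis by (rule eqn_trans)
qed

lemma ev_mult:
  fixes X Y :: "'a::comm_ring_1 fps"
  assumes X0: "X$0 = 0" and Y0: "Y$0 = 0"
  shows "ev (F * G) X Y = ev F X Y * ev G X Y"
proof (rule eqn_all)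
  fix n
  have "eqn n (ev (F*G) X Y) (Qn n X Y (F*G))" by (rule ev_Qn[OF X0 Y0])
  moreover have "eqn n (Qn n X Y (F*G)) (Qn n X Y F * Qn n X Y G)" by (rule eqn_sym, rule Qn_mult[OF X0 Y0])
  moreover have "eqn n (Qn n X Y F * Qn n X Y G) (ev F X Y * ev G X Y)"
    by (rule eqn_mult; rule eqn_sym, rule ev_Qn[OF X0 Y0])
  ultimately show "eqn n (ev (F * G) X Y) (ev F X Y * ev G X Y)" by (metis eqn_trans)
qed

lemma ev_add: "ev (F + G) X Y = ev F X Y + ev G X Y"
  by (rule fps_ext) (simp add: ev_nth sum.distrib algebra_simps)

lemma ev_uminus: "ev (- F) X Y = - ev F X Y"
  by (rule fps_ext) (simp add: ev_nth sum_negf)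

lemma ev_diff: "ev (F - G) X Y = ev F X Y - ev G X Y"
  using ev_add[of F "-G" X Y] ev_uminus[of G X Y] by simp

lemma ev_const: "ev (fps_const (fps_const c)) X Y = fps_const c"
proof (rule fps_ext)
  fix n
  have "ev (fps_const (fps_const c)) X Y $ n = (\<Sum>i\<le>n. \<Sum>j\<le>n. (if i = 0 \<and> j = 0 then c * (X^i * Y^j)$n else 0))"
    unfolding ev_nth by (intro sum.cong refl) auto
  also have "\<dots> = c * (1::'a fps)$n"
    by (simp add: sum.If_cases Int_def)
  finally show "ev (fps_const (fps_const c)) X Y $ n = fps_const c $ n" by simp
qed

lemma ev_one: "ev 1 X Y = 1"
  using ev_const[of 1 X Y] by simp

lemma ev_zero: "ev 0 X Y = 0"
  using ev_const[of 0 X Y] by simp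

lemma ev_power:
  fixes X Y :: "'a::comm_ring_1 fps"
  assumes X0: "X$0 = 0" and Y0: "Y$0 = 0"
  shows "ev (F ^ k) X Y = ev F X Y ^ k"
  by (induction k) (simp_all add: ev_one ev_mult[OF X0 Y0])

lemma ev_sum: "finite S \<Longrightarrow> ev (\<Sum>a\<in>S. f a) X Y = (\<Sum>a\<in>S. ev (f a) X Y)"
  by (induction S rule: finite_induct) (simp_all add: ev_add ev_zero)

lemma ev_0: "ev F X Y $ 0 = F$0$0"
  by (simp add: ev_nth)

lemma pow_vanish:
  fixes G :: "'a::comm_ring_1 fps fps"
  assumes G0: "G$0$0 = 0"
  shows "i + j < k \<Longrightarrow> (G^k)$i$j = 0"
proof (induction k arbitrary: i j)
  case 0 thus ?case by simp
next
  case (Suc k)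
  have "(G^Suc k)$i$j = (\<Sum>a=0..i. \<Sum>c=0..j. G$a$c * (G^k)$(i-a)$(j-c))"
    by (simp add: fps_mult_nth fps_sum_nth)
  also have "\<dots> = 0"
  proof (intro sum.neutral ballI)
    fix a c assume a: "a \<in> {0..i}" and c: "c \<in> {0..j}"
    show "G$a$c * (G^k)$(i-a)$(j-c) = 0"
    proof (cases "a = 0 \<and> c = 0")
      case True thus ?thesis using G0 by simp
    next
      case False
      hence "(i-a) + (j-c) < k" using Suc.prems a c by auto
      thus ?thesis using Suc.IH by simp
    qed
  qed
  finally show ?case .
qed

definition compH :: "'a::comm_ring_1 fps \<Rightarrow> 'a fps fps \<Rightarrow> 'a fps fps" where
  "compH P G = Abs_fps (\<lambda>i. Abs_fps (\<lambda>j. (\<Sum>k\<le>i+j. fps_const (fps_const (P$k)) * G^k) $i$j))"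

lemma ev_compose:
  fixes X Y :: "'a::comm_ring_1 fps"
  assumes X0: "X$0 = 0" and Y0: "Y$0 = 0" and G0: "G$0$0 = 0"
  shows "ev (compH P G) X Y = fps_compose P (ev G X Y)"
proof -
  define c where "c k = fps_const (fps_const (P$k))" for k :: nat
  define S where "S N = (\<Sum>k\<le>N. c k * G^k)" for N
  define H where "H = compH P G"
  have HS: "H$i$j = S N $i$j" if "i + j \<le> N" for i j N
  proof -
    have "S N $i$j = S (i+j) $i$j + (\<Sum>k\<in>{..N} - {..i+j}. c k * G^k)$i$j"
      unfolding S_def using that by (simp add: sum.subset_diff[of "{..i+j}" "{..N}"] add.commute)
    also have "(\<Sum>k\<in>{..N} - {..i+j}. c k * G^k)$i$j = 0"
      by (simp add: fps_sum_nth c_def pow_vanish[OF G0])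
    finally show ?thesis by (simp add: H_def compH_def S_def c_def)
  qed
  let ?g = "ev G X Y"
  have g0: "?g $ 0 = 0" using G0 by (simp add: ev_0)
  show "ev (compH P G) X Y = fps_compose P ?g" unfolding H_def[symmetric]
  proof (rule fps_ext)
    fix n
    have "ev H X Y $ n = ev (S (2*n)) X Y $ n"
      unfolding ev_nth by (intro sum.cong refl) (simp add: HS[of _ _ "2*n"])
    also have "ev (S (2*n)) X Y = (\<Sum>k\<le>2*n. fps_const (P$k) * ?g^k)"
      unfolding S_def by (simp add: ev_sum ev_mult[OF X0 Y0] ev_power[OF X0 Y0] c_def ev_const)
    also have "(\<Sum>k\<le>2*n. fps_const (P$k) * ?g^k) $ n = (\<Sum>k\<le>n. P$k * (?g^k)$n)"
      unfolding fps_sum_nth fps_mult_left_const_nth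
      by (rule sum.mono_neutral_right) (auto simp: vanish[OF g0, of n _ 1, simplified])
    also have "\<dots> = fps_compose P ?g $ n" by (simp add: fps_compose_nth atLeast0AtMost)
    finally show "ev H X Y $ n = fps_compose P ?g $ n" .
  qed
qed



lemma curve_ring_iff:
  "z \<in> curve_ring X Y \<longleftrightarrow> (\<exists>F. \<forall>b. z b = fps_to_fls (ev F (X b) (Y b)))"
proof
  assume "z \<in> curve_ring X Y"
  then obtain F where F: "\<forall>b. z b = fps_to_fls (bps_subst F (X b) (Y b))" by (auto simp: curve_ring_def)
  define F' where "F' = Abs_fps (\<lambda>i. Abs_fps (\<lambda>j. F i j))"
  have "(\<lambda>i j. F'$i$j) = F" by (simp add: F'_def)
  thus "\<exists>F. \<forall>b. z b = fps_to_fls (ev F (X b) (Y b))" using F by (auto simp: ev_def)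
next
  assume "\<exists>F. \<forall>b. z b = fps_to_fls (ev F (X b) (Y b))"
  thus "z \<in> curve_ring X Y" by (auto simp: curve_ring_def ev_def)
qed

locale curve =
  fixes X Y :: "'b \<Rightarrow> 'a::field fps"
  assumes param: "\<forall>b. X b $ 0 = 0 \<and> Y b $ 0 = 0"
begin

abbreviation "R \<equiv> curve_ring X Y"

lemma X0: "X b $ 0 = 0" and Y0: "Y b $ 0 = 0" using param by auto

lemma R_add: "z \<in> R \<Longrightarrow> w \<in> R \<Longrightarrow> z + w \<in> R"
  unfolding curve_ring_iff
proof (elim exE)
  fix F G assume F: "\<forall>b. z b = fps_to_fls (ev F (X b) (Y b))" and G: "\<forall>b. w b = fps_to_fls (ev G (X b) (Y b))"
  show "\<exists>H. \<forall>b. (z + w) b = fps_to_fls (ev H (X b) (Y b))"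
    by (rule exI[of _ "F+G"]) (simp add: F G ev_add)
qed

lemma R_mult: "z \<in> R \<Longrightarrow> w \<in> R \<Longrightarrow> z * w \<in> R"
  unfolding curve_ring_iff
proof (elim exE)
  fix F G assume F: "\<forall>b. z b = fps_to_fls (ev F (X b) (Y b))" and G: "\<forall>b. w b = fps_to_fls (ev G (X b) (Y b))"
  show "\<exists>H. \<forall>b. (z * w) b = fps_to_fls (ev H (X b) (Y b))"
    by (rule exI[of _ "F*G"]) (simp add: F G ev_mult[OF X0 Y0] fls_times_fps_to_fls)
qed

lemma R_uminus: "z \<in> R \<Longrightarrow> - z \<in> R"
  unfolding curve_ring_iff
proof (elim exE)
  fix F assume F: "\<forall>b. z b = fps_to_fls (ev F (X b) (Y b))"
  show "\<exists>H. \<forall>b. (- z) b = fps_to_fls (ev H (X b) (Y b))"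
    by (rule exI[of _ "-F"]) (simp add: F ev_uminus)
qed

lemma R_diff: "z \<in> R \<Longrightarrow> w \<in> R \<Longrightarrow> z - w \<in> R"
  using R_add[of z "-w"] R_uminus[of w] by simp

lemma R_const: "(\<lambda>b. fls_const c) \<in> R"
  unfolding curve_ring_iff
  by (rule exI[of _ "fps_const (fps_const c)"]) (simp add: ev_const)

lemma R_one: "1 \<in> R" using R_const[of 1] by (simp add: one_fun_def)
lemma R_zero: "0 \<in> R" using R_const[of 0] by (simp add: zero_fun_def)

lemma R_kscale: "z \<in> R \<Longrightarrow> kscale c z \<in> R"
  unfolding kscale_conv by (rule R_mult[OF R_const])

lemma R_subspace: "KV.subspace R"
  by (rule KV.subspaceI) (auto simp: R_zero R_add R_kscale)

lemma R_sum: "finite S \<Longrightarrow> (\<And>s. s \<in> S \<Longrightarrow> f s \<in> R) \<Longrightarrow> (\<Sum>s\<in>S. f s) \<in> R"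
  by (induction S rule: finite_induct) (auto simp: R_zero R_add)

lemma R_prod: "finite S \<Longrightarrow> (\<And>s. s \<in> S \<Longrightarrow> f s \<in> R) \<Longrightarrow> (\<Prod>s\<in>S. f s) \<in> R"
  by (induction S rule: finite_induct) (auto simp: R_one R_mult)

lemma R_sub_Rt: "R \<subseteq> power_series_part"
  by (auto simp: curve_ring_iff power_series_part_def)

lemma R_compose:
  assumes x: "x \<in> R" and x0: "\<forall>b. x b $$ 0 = 0"
  shows "(\<lambda>b. fps_to_fls (fps_compose P (fls_regpart (x b)))) \<in> R"
proof -
  obtain G where G: "\<forall>b. x b = fps_to_fls (ev G (X b) (Y b))" using x by (auto simp: curve_ring_iff)
  have "fps_to_fls (ev G (X undefined) (Y undefined)) $$ 0 = 0" using x0 G by metis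
  hence "G$0$0 = 0" by (simp add: ev_0)
  hence "\<forall>b. fps_to_fls (fps_compose P (fls_regpart (x b))) = fps_to_fls (ev (compH P G) (X b) (Y b))"
    using G by (simp add: ev_compose[OF X0 Y0])
  thus ?thesis unfolding curve_ring_iff by blast
qed

end



lemma sum_fun_apply: "(\<Sum>s\<in>S. f s) x = (\<Sum>s\<in>S. f s x)"
  by (induction S rule: infinite_finite_induct) auto

lemma kscale_nth: "kscale c z b $$ j = c * z b $$ j"
  by (simp add: kscale_def)

lemma Rt_iff: "y \<in> power_series_part \<longleftrightarrow> (\<forall>b. 0 \<le> fls_subdegree (y b))"
proof
  assume y: "y \<in> power_series_part"
  show "\<forall>b. 0 \<le> fls_subdegree (y b)"
  proof
    fix b
    obtain g where "y b = fps_to_fls g" using y by (auto simp: power_series_part_def)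
    thus "0 \<le> fls_subdegree (y b)" by (simp add: fls_subdegree_fls_to_fps_gt0)
  qed
next
  assume h: "\<forall>b. 0 \<le> fls_subdegree (y b)"
  show "y \<in> power_series_part" unfolding power_series_part_def
  proof (intro CollectI allI exI)
    fix b show "y b = fps_to_fls (fls_regpart (y b))" using h by (simp only: fls_regpart_to_fls_trivial)
  qed
qed

lemma Rt_iff': "y \<in> power_series_part \<longleftrightarrow> (\<forall>b j. j < 0 \<longrightarrow> y b $$ j = 0)"
proof
  assume "y \<in> power_series_part"
  hence "0 \<le> fls_subdegree (y b)" for b by (simp add: Rt_iff)
  thus "\<forall>b j. j < 0 \<longrightarrow> y b $$ j = 0" by (meson fls_eq0_below_subdegree less_le_trans)
next
  assume "\<forall>b j. j < 0 \<longrightarrow> y b $$ j = 0"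
  thus "y \<in> power_series_part" unfolding Rt_iff by (blast intro: fls_subdegree_ge0I)
qed

lemma Rt_diff: "y \<in> power_series_part \<Longrightarrow> z \<in> power_series_part \<Longrightarrow> y - z \<in> power_series_part"
  by (simp add: Rt_iff')

lemma Rt_add: "y \<in> power_series_part \<Longrightarrow> z \<in> power_series_part \<Longrightarrow> y + z \<in> power_series_part"
  by (simp add: Rt_iff')

lemma Rt_mult:
  fixes y :: "'b \<Rightarrow> 'a::field fls"
  assumes "y \<in> power_series_part" "z \<in> power_series_part"
  shows "y * z \<in> power_series_part"
  unfolding power_series_part_def
proof (intro CollectI allI)
  fix b
  obtain g where g: "y b = fps_to_fls g" using assms(1) unfolding power_series_part_def by blast
  obtain h where h: "z b = fps_to_fls h" using assms(2) unfolding power_series_part_def by blast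
  note g h
  hence "(y * z) b = fps_to_fls (g * h)" by (simp add: fls_times_fps_to_fls)
  thus "\<exists>g. (y * z) b = fps_to_fls g" by blast
qed

lemma Rt_subspace: "KV.subspace (power_series_part :: ('b \<Rightarrow> 'a::field fls) set)"
  by (rule KV.subspaceI) (auto simp: Rt_iff' kscale_nth)

lemma mult_Rt_char:
  fixes w :: "'b \<Rightarrow> 'a::field fls"
  assumes w: "w \<in> power_series_part" and nz: "nonzerodiv w" and y: "y \<in> power_series_part"
  shows "y \<in> (\<lambda>a. w * a) ` power_series_part \<longleftrightarrow> (\<forall>b i. i < fls_subdegree (w b) \<longrightarrow> y b $$ i = 0)"
proof
  assume "y \<in> (\<lambda>a. w * a) ` power_series_part"
  then obtain a where a: "a \<in> power_series_part" "y = w * a" by auto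
  show "\<forall>b i. i < fls_subdegree (w b) \<longrightarrow> y b $$ i = 0"
  proof (intro allI impI)
    fix b i assume i: "i < fls_subdegree (w b)"
    have "0 \<le> fls_subdegree (a b)" using a(1) by (simp add: Rt_iff)
    hence "i < fls_subdegree (w b) + fls_subdegree (a b)" using i by simp
    thus "y b $$ i = 0" using a(2) by (simp add: fls_times_nth_eq0)
  qed
next
  assume c: "\<forall>b i. i < fls_subdegree (w b) \<longrightarrow> y b $$ i = 0"
  define a where "a = (\<lambda>b. y b / w b)"
  have wb: "w b \<noteq> 0" for b using nz by (simp add: nonzerodiv_def)
  have "a \<in> power_series_part" unfolding Rt_iff
  proof
    fix b
    show "0 \<le> fls_subdegree (a b)"
    proof (cases "y b = 0")
      case True thus ?thesis by (simp add: a_def)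
    next
      case False
      have "fls_subdegree (w b) \<le> fls_subdegree (y b)"
        using c False by (intro fls_subdegree_geI) auto
      thus ?thesis using False wb by (simp add: a_def divide_inverse)
    qed
  qed
  moreover have "y = w * a" using wb by (auto simp: a_def fun_eq_iff)
  ultimately show "y \<in> (\<lambda>a. w * a) ` power_series_part" by blast
qed

definition Eb :: "'b \<Rightarrow> nat \<Rightarrow> 'b \<Rightarrow> 'a::field fls" where
  "Eb b i = (\<lambda>b'. if b' = b then fps_to_fls (fps_X ^ i) else 0)"

lemma Eb_nth: "Eb b i b' $$ j = (if b' = b \<and> j = int i then 1 else 0)"
  by (auto simp: Eb_def)

lemma sumE_nth:
  assumes fin: "finite S"
  shows "(\<Sum>s\<in>S. kscale (c s) (Eb (fst s) (snd s))) b' $$ j = (if 0 \<le> j \<and> (b', nat j) \<in> S then c (b', nat j) else 0)"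
proof -
  have "(\<Sum>s\<in>S. kscale (c s) (Eb (fst s) (snd s))) b' $$ j = (\<Sum>s\<in>S. if s = (b', nat j) \<and> 0 \<le> j then c s else 0)"
    unfolding sum_fun_apply fls_nth_sum kscale_nth Eb_nth
    by (intro sum.cong refl) auto
  also have "\<dots> = (if 0 \<le> j \<and> (b', nat j) \<in> S then c (b', nat j) else 0)"
    using fin by (cases "0 \<le> j") (simp_all add: sum.delta')
  finally show ?thesis .
qed

lemma quot_dim_Rt_mult:
  fixes w :: "'b::finite \<Rightarrow> 'a::field fls"
  assumes w: "w \<in> power_series_part" and nz: "nonzerodiv w"
  shows "quot_dim power_series_part ((\<lambda>a. w * a) ` power_series_part) (\<Sum>b\<in>UNIV. nat (fls_subdegree (w b)))"
proof -
  define \<nu> where "\<nu> b = nat (fls_subdegree (w b))" for b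
  have \<nu>: "int (\<nu> b) = fls_subdegree (w b)" for b using w by (simp add: \<nu>_def Rt_iff)
  define S where "S = Sigma UNIV (\<lambda>b. {..<\<nu> b})"
  have fS: "finite S" by (simp add: S_def)
  have cS: "card S = (\<Sum>b\<in>UNIV. \<nu> b)" by (simp add: S_def)
  let ?v = "\<lambda>s. Eb (fst s) (snd s) :: 'b \<Rightarrow> 'a fls"
  let ?Rt = "power_series_part :: ('b \<Rightarrow> 'a fls) set"
  have vRt: "?v s \<in> ?Rt" for s by (auto simp: Rt_iff' Eb_nth)
  have sumRt: "(\<Sum>s\<in>S. kscale (c s) (?v s)) \<in> ?Rt" for c
    by (simp add: Rt_iff' sumE_nth[OF fS])
  have "qsI ?Rt ((\<lambda>a. w * a) ` ?Rt) S ?v" unfolding qsI_def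
  proof (intro conjI allI impI ballI)
    show "finite S" by fact
  next
    fix s show "?v s \<in> ?Rt" by (rule vRt)
  next
    fix c s assume c: "(\<Sum>s\<in>S. kscale (c s) (?v s)) \<in> (\<lambda>a. w * a) ` ?Rt" and s: "s \<in> S"
    obtain b i where s': "s = (b, i)" by fastforce
    have i: "i < \<nu> b" using s s' by (auto simp: S_def)
    have "(\<Sum>s\<in>S. kscale (c s) (?v s)) b $$ int i = 0"
      using c mult_Rt_char[OF w nz sumRt] i \<nu>[of b] by auto
    thus "c s = 0" using s s' by (simp add: sumE_nth[OF fS])
  next
    fix y assume y: "y \<in> ?Rt"
    define c where "c s = y (fst s) $$ int (snd s)" for s
    have "y - (\<Sum>s\<in>S. kscale (c s) (?v s)) \<in> (\<lambda>a. w * a) ` ?Rt"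
    proof (subst mult_Rt_char[OF w nz Rt_diff[OF y sumRt]], intro allI impI)
      fix b j assume j: "j < fls_subdegree (w b)"
      show "(y - (\<Sum>s\<in>S. kscale (c s) (?v s))) b $$ j = 0"
      proof (cases "0 \<le> j")
        case True
        hence "(b, nat j) \<in> S" using j \<nu>[of b] by (auto simp: S_def)
        thus ?thesis using True by (simp add: sumE_nth[OF fS] c_def)
      next
        case False
        thus ?thesis using y by (simp add: sumE_nth[OF fS] Rt_iff')
      qed
    qed
    thus "\<exists>c. y - (\<Sum>s\<in>S. kscale (c s) (?v s)) \<in> (\<lambda>a. w * a) ` ?Rt" by blast
  qed
  from qsI_quot_dim[OF this] show ?thesis using cS by (simp add: \<nu>_def)
qed



lemma X_power_shift:
  fixes g :: "'a::comm_ring_1 fps"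
  assumes "\<And>i. i < a \<Longrightarrow> g$i = 0"
  shows "fps_X^a * fps_shift a g = g"
  by (rule fps_ext) (simp add: fps_X_power_mult_nth assms)

lemma compose_trunc:
  fixes x :: "'a::comm_ring_1 fps"
  assumes x0: "x$0 = 0"
  shows "eqn n (\<Sum>k<Suc n. fps_const (P$k) * x^k) (fps_compose P x)"
  unfolding eqn_def
proof (intro allI impI)
  fix m assume m: "m \<le> n"
  have "(\<Sum>k<Suc n. fps_const (P$k) * x^k) $ m = (\<Sum>k<Suc n. P$k * (x^k)$m)"
    by (simp add: fps_sum_nth)
  also have "\<dots> = (\<Sum>k\<in>{0..m}. P$k * (x^k)$m)"
    by (rule sum.mono_neutral_right) (use m in \<open>auto simp: vanish[OF x0, of m _ 1, simplified]\<close>)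
  finally show "(\<Sum>k<Suc n. fps_const (P$k) * x^k) $ m = fps_compose P x $ m"
    by (simp add: fps_compose_nth)
qed

lemma division_expansion:
  fixes x y :: "'a::field fps"
  assumes x0: "x$0 = 0" and xnz: "x \<noteq> 0"
  shows "\<exists>P. y = (\<Sum>i<subdegree x. (fps_compose (P i) x) * fps_X^i)"
proof -
  define a where "a = subdegree x"
  define u where "u = fps_shift a x"
  have xu: "x = fps_X^a * u"
    unfolding u_def by (rule X_power_shift[symmetric]) (unfold a_def, erule nth_less_subdegree_zero)
  have u0: "u$0 \<noteq> 0" using xnz by (simp add: u_def a_def)
  have uinv: "u * inverse u = 1" using u0 by (rule inverse_mult_eq_1')
  define tr where "tr f = (\<Sum>i<a. fps_const (f$i) * fps_X^i)" for f :: "'a fps"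
  have tr_nth: "tr f $ n = (if n < a then f$n else 0)" for f n
  proof -
    have "tr f $ n = (\<Sum>i<a. if n = i then f$i else 0)"
      unfolding tr_def fps_sum_nth by (intro sum.cong refl) simp
    thus ?thesis by (simp add: sum.delta)
  qed
  define step where "step f = fps_shift a (f - tr f) * inverse u" for f
  have step: "f = tr f + x * step f" for f
  proof -
    have "fps_X^a * fps_shift a (f - tr f) = f - tr f"
      by (rule X_power_shift) (simp add: tr_nth)
    moreover have "x * step f = (fps_X^a * fps_shift a (f - tr f)) * (u * inverse u)"
      unfolding step_def xu by (simp only: mult_ac)
    ultimately have "x * step f = f - tr f" using uinv by simp
    thus ?thesis by simp
  qed
  define r where "r k = (step ^^ k) y" for k
  have rS: "r (Suc k) = step (r k)" for k by (simp add: r_def)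
  have exp: "y = (\<Sum>k<K. tr (r k) * x^k) + x^K * r K" for K
  proof (induction K)
    case 0 thus ?case by (simp add: r_def)
  next
    case (Suc K)
    have e: "r K = tr (r K) + x * r (Suc K)" unfolding rS by (rule step)
    have "x^K * r K = x^K * (tr (r K) + x * r (Suc K))" using e by (rule arg_cong)
    also have "\<dots> = x^K * tr (r K) + x^Suc K * r (Suc K)" by (simp add: algebra_simps)
    finally have "x^K * r K = x^K * tr (r K) + x^Suc K * r (Suc K)" .
    thus ?case using Suc by (simp add: algebra_simps)
  qed
  define P where "P i = Abs_fps (\<lambda>k. r k $ i)" for i
  have "y = (\<Sum>i<a. (fps_compose (P i) x) * fps_X^i)"
  proof (rule eqn_all)
    fix n
    have e1: "eqn n y (\<Sum>k<Suc n. tr (r k) * x^k)"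
      unfolding eqn_def
    proof (intro allI impI)
      fix m assume "m \<le> n"
      hence "(x^Suc n * r (Suc n)) $ m = 0" using vanish[OF x0, of m "Suc n" "r (Suc n)"] by (simp add: mult.commute)
      moreover from exp[of "Suc n"] have "y $ m = ((\<Sum>k<Suc n. tr (r k) * x^k) + x^Suc n * r (Suc n)) $ m"
        by (rule arg_cong)
      ultimately show "y $ m = (\<Sum>k<Suc n. tr (r k) * x^k) $ m" by (simp only: fps_add_nth add_0_right)
    qed
    have e2: "(\<Sum>k<Suc n. tr (r k) * x^k) = (\<Sum>i<a. (\<Sum>k<Suc n. fps_const (P i $ k) * x^k) * fps_X^i)"
    proof -
      have "(\<Sum>k<Suc n. tr (r k) * x^k) = (\<Sum>k<Suc n. \<Sum>i<a. fps_const (r k $ i) * fps_X^i * x^k)"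
        unfolding tr_def by (simp add: sum_distrib_right)
      also have "\<dots> = (\<Sum>i<a. \<Sum>k<Suc n. fps_const (r k $ i) * fps_X^i * x^k)" by (rule sum.swap)
      also have "\<dots> = (\<Sum>i<a. (\<Sum>k<Suc n. fps_const (P i $ k) * x^k) * fps_X^i)"
        unfolding P_def sum_distrib_right by (intro sum.cong refl) (simp add: mult_ac)
      finally show ?thesis .
    qed
    have e3: "eqn n (\<Sum>i<a. (\<Sum>k<Suc n. fps_const (P i $ k) * x^k) * fps_X^i) (\<Sum>i<a. (fps_compose (P i) x) * fps_X^i)"
      by (intro eqn_sum eqn_mult compose_trunc[OF x0] eqn_refl)
    show "eqn n y (\<Sum>i<a. fps_compose (P i) x * fps_X ^ i)"
      using eqn_trans[OF e1[unfolded e2] e3] .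
  qed
  thus ?thesis unfolding a_def by blast
qed



lemma prod_fun_apply: "(\<Prod>s\<in>S. f s) x = (\<Prod>s\<in>S. f s x)"
  by (induction S rule: infinite_finite_induct) auto

lemma fps_to_fls_sum: "fps_to_fls (\<Sum>s\<in>S. f s) = (\<Sum>s\<in>S. fps_to_fls (f s))"
  by (induction S rule: infinite_finite_induct) auto

locale curveF = curve X Y for X Y :: "'b::finite \<Rightarrow> 'a::field fps" +
  assumes total_frac: "is_total_ring_of_fractions (curve_ring X Y)"
begin

lemma frac: "\<exists>r\<in>R. \<exists>s\<in>R. nonzerodiv s \<and> z * s = r"
  using total_frac by (simp add: is_total_ring_of_fractions_def)

lemma exists_x: "\<exists>x\<in>R. nonzerodiv x \<and> (\<forall>b. x b $$ 0 = 0)"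
proof -
  obtain r s where r: "r \<in> R" and s: "s \<in> R" "nonzerodiv s" and e: "(\<lambda>b. fls_X) * s = r"
    using frac[of "\<lambda>b. fls_X"] by blast
  have sRt: "s \<in> power_series_part" using s R_sub_Rt by blast
  have rb: "r b = fls_X * s b" for b using e by (auto simp: fun_eq_iff)
  have "nonzerodiv r" using s(2) by (simp add: nonzerodiv_def rb)
  moreover have "r b $$ 0 = 0" for b
    using sRt unfolding rb fls_X_times_conv_shift(1) by (simp add: Rt_iff')
  ultimately show ?thesis using r by blast
qed

lemma generators:
  assumes x: "x \<in> R" "nonzerodiv x" "\<forall>b. x b $$ 0 = 0"
  defines "S \<equiv> Sigma (UNIV::'b set) (\<lambda>b. {..<subdegree (fls_regpart (x b))})"
  assumes y: "y \<in> power_series_part"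
  shows "\<exists>Q. (\<forall>s. Q s \<in> R) \<and> y = (\<Sum>s\<in>S. Q s * Eb (fst s) (snd s))"
proof -
  define xr where "xr b = fls_regpart (x b)" for b
  have xRt: "x \<in> power_series_part" using x R_sub_Rt by blast
  have xb: "x b = fps_to_fls (xr b)" for b using xRt by (simp add: xr_def Rt_iff)
  have xr0: "xr b $ 0 = 0" for b using x(3) by (simp add: xr_def)
  have xrnz: "xr b \<noteq> 0" for b using x(2) xb[of b] by (auto simp: nonzerodiv_def)
  have "\<forall>b. \<exists>P. fls_regpart (y b) = (\<Sum>i<subdegree (xr b). (fps_compose (P i) (xr b)) * fps_X^i)"
    using division_expansion[OF xr0 xrnz] by blast
  then obtain PP where PP: "\<And>b. fls_regpart (y b) = (\<Sum>i<subdegree (xr b). (fps_compose (PP b i) (xr b)) * fps_X^i)"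
    by metis
  define Q where "Q s = (\<lambda>b'. fps_to_fls (fps_compose (PP (fst s) (snd s)) (xr b')))" for s
  have QR: "Q s \<in> R" for s unfolding Q_def xr_def by (rule R_compose[OF x(1) x(3)])
  have "y = (\<Sum>s\<in>S. Q s * Eb (fst s) (snd s))"
  proof (rule ext)
    fix b'
    have "(\<Sum>s\<in>S. Q s * Eb (fst s) (snd s)) b' = (\<Sum>s\<in>S. Q s b' * Eb (fst s) (snd s) b')"
      by (simp add: sum_fun_apply)
    also have "\<dots> = (\<Sum>b\<in>UNIV. \<Sum>i<subdegree (xr b). Q (b,i) b' * Eb b i b')"
      unfolding S_def xr_def by (subst sum.Sigma) (simp_all add: case_prod_unfold)
    also have "\<dots> = (\<Sum>b\<in>UNIV. if b = b' then (\<Sum>i<subdegree (xr b'). Q (b',i) b' * fps_to_fls (fps_X^i)) else 0)"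
      by (intro sum.cong refl) (auto simp: Eb_def)
    also have "\<dots> = (\<Sum>i<subdegree (xr b'). Q (b',i) b' * fps_to_fls (fps_X^i))"
      by (simp add: sum.delta')
    also have "\<dots> = fps_to_fls (\<Sum>i<subdegree (xr b'). (fps_compose (PP b' i) (xr b')) * fps_X^i)"
      by (simp add: Q_def fls_times_fps_to_fls fps_to_fls_sum)
    also have "\<dots> = fps_to_fls (fls_regpart (y b'))" using PP[of b'] by simp
    also have "\<dots> = y b'" using y by (simp add: Rt_iff)
    finally show "y b' = (\<Sum>s\<in>S. Q s * Eb (fst s) (snd s)) b'" by simp
  qed
  thus ?thesis using QR by blast
qed

lemma conductor: "\<exists>g\<in>R. nonzerodiv g \<and> (\<forall>y\<in>power_series_part. g * y \<in> R)"
proof -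
  obtain x where x: "x \<in> R" "nonzerodiv x" "\<forall>b. x b $$ 0 = 0" using exists_x by blast
  define S where "S = Sigma (UNIV::'b set) (\<lambda>b. {..<subdegree (fls_regpart (x b))})"
  have fS: "finite S" by (simp add: S_def)
  have "\<forall>s. \<exists>r d. r \<in> R \<and> d \<in> R \<and> nonzerodiv d \<and> Eb (fst s) (snd s) * d = r"
    using frac by blast
  then obtain rr dd where rd: "\<And>s. rr s \<in> R" "\<And>s. dd s \<in> R" "\<And>s. nonzerodiv (dd s)"
    "\<And>s. Eb (fst s) (snd s) * dd s = rr s" by metis
  define g where "g = (\<Prod>s\<in>S. dd s)"
  have gR: "g \<in> R" unfolding g_def by (rule R_prod[OF fS rd(2)])
  have gnz: "nonzerodiv g"
    using rd(3) fS by (auto simp: nonzerodiv_def g_def prod_fun_apply)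
  have "g * y \<in> R" if y: "y \<in> power_series_part" for y
  proof -
    obtain Q where Q: "\<And>s. Q s \<in> R" "y = (\<Sum>s\<in>S. Q s * Eb (fst s) (snd s))"
      using generators[OF x y] unfolding S_def by blast
    have "g * y = (\<Sum>s\<in>S. Q s * (Eb (fst s) (snd s) * g))"
      unfolding Q(2) by (simp add: sum_distrib_left mult_ac)
    also have "\<dots> = (\<Sum>s\<in>S. Q s * (rr s * (\<Prod>s'\<in>S - {s}. dd s')))"
    proof (intro sum.cong refl)
      fix s assume "s \<in> S"
      hence "g = dd s * (\<Prod>s'\<in>S - {s}. dd s')" unfolding g_def using fS by (simp add: prod.remove)
      thus "Q s * (Eb (fst s) (snd s) * g) = Q s * (rr s * (\<Prod>s'\<in>S - {s}. dd s'))"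
        using rd(4)[of s] by (simp add: mult.assoc[symmetric])
    qed
    also have "\<dots> \<in> R"
      using fS by (intro R_sum R_mult Q(1) rd(1) R_prod rd(2)) auto
    finally show ?thesis .
  qed
  thus ?thesis using gR gnz by blast
qed

end



lemma quot_dim_compose:
  fixes A :: "('b \<Rightarrow> 'a::field fls) set"
  assumes sB: "KV.subspace B" and sC: "KV.subspace C" and CB: "C \<subseteq> B" and BA: "B \<subseteq> A"
    and q1: "quot_dim A B n" and q2: "quot_dim B C k"
  shows "quot_dim A C (n + k)"
proof -
  obtain T1 where T1: "qsI A B T1 id" "card T1 = n" using quot_dim_qsI[OF q1] sB KV.subspace_0 by blast
  obtain T2 where T2: "qsI B C T2 id" "card T2 = k" using quot_dim_qsI[OF q2] sC KV.subspace_0 by blast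
  have c: "qsI A C (T1 \<union> T2) id" "T1 \<inter> T2 = {}" using qs_compose[OF sB CB BA T1(1) T2(1)] by auto
  have f: "finite T1" "finite T2" using T1 T2 by (auto simp: qsI_def)
  have "card (T1 \<union> T2) = n + k" using card_Un_disjoint[OF f c(2)] T1 T2 by simp
  thus ?thesis using qsI_quot_dim[OF c(1)] by simp
qed

lemma quot_dim_split:
  fixes A :: "('b \<Rightarrow> 'a::field fls) set"
  assumes sA: "KV.subspace A" and sB: "KV.subspace B" and sC: "KV.subspace C"
    and CB: "C \<subseteq> B" and BA: "B \<subseteq> A" and q: "quot_dim A C p"
  shows "\<exists>n k. quot_dim A B n \<and> quot_dim B C k \<and> n + k = p"
proof -
  obtain T where T: "qsI A C T id" using quot_dim_qsI[OF q] sC KV.subspace_0 by blast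
  obtain T1 T2 where T12: "qsI A B T1 id" "qsI B C T2 id" using qs_split[OF sA sB sC CB BA T] by blast
  have q1: "quot_dim A B (card T1)" and q2: "quot_dim B C (card T2)" using T12 qsI_quot_dim by blast+
  have "quot_dim A C (card T1 + card T2)" by (rule quot_dim_compose[OF sB sC CB BA q1 q2])
  hence "card T1 + card T2 = p" using quot_dim_unique[OF sC _ q] by blast
  thus ?thesis using q1 q2 by blast
qed

lemma subspace_mult_image:
  fixes S :: "('b \<Rightarrow> 'a::field fls) set"
  assumes "KV.subspace S"
  shows "KV.subspace ((\<lambda>a. w * a) ` S)"
proof (rule KV.subspaceI)
  have "0 \<in> S" by (rule KV.subspace_0[OF assms])
  hence "w * 0 \<in> (\<lambda>a. w * a) ` S" by (rule imageI)
  thus "0 \<in> (\<lambda>a. w * a) ` S" by simp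
next
  fix x y assume "x \<in> (\<lambda>a. w * a) ` S" "y \<in> (\<lambda>a. w * a) ` S"
  then obtain a a' where "a \<in> S" "a' \<in> S" "x = w * a" "y = w * a'" by auto
  moreover have "a + a' \<in> S" using assms \<open>a \<in> S\<close> \<open>a' \<in> S\<close> by (rule KV.subspace_add)
  ultimately have "x + y = w * (a + a')" "a + a' \<in> S" by (simp_all add: distrib_left)
  thus "x + y \<in> (\<lambda>a. w * a) ` S" by (simp only: image_eqI)
next
  fix c x assume "x \<in> (\<lambda>a. w * a) ` S"
  then obtain a where "a \<in> S" "x = w * a" by auto
  moreover have "kscale c a \<in> S" using assms \<open>a \<in> S\<close> by (rule KV.subspace_scale)
  ultimately have "kscale c x = w * kscale c a" "kscale c a \<in> S" by (simp_all add: kscale_mult_right)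
  thus "kscale c x \<in> (\<lambda>a. w * a) ` S" by (simp only: image_eqI)
qed

lemma image_mult_mult: "(\<lambda>a. w * a) ` ((\<lambda>a. v * a) ` S) = (\<lambda>a. (w * v) * a) ` (S :: ('b \<Rightarrow> 'a::field fls) set)"
  by (simp only: image_image mult.assoc)

lemma image_mult_cancel: "w * v = 1 \<Longrightarrow> (\<lambda>a. w * a) ` ((\<lambda>a. v * a) ` S) = (S :: ('b \<Rightarrow> 'a::field fls) set)"
  by (simp add: image_mult_mult)

definition invK :: "('b \<Rightarrow> 'a::field fls) \<Rightarrow> 'b \<Rightarrow> 'a fls" where
  "invK u = (\<lambda>b. inverse (u b))"

lemma invK_mult: "nonzerodiv u \<Longrightarrow> u * invK u = 1"
  by (auto simp: invK_def nonzerodiv_def fun_eq_iff)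

lemma invK_mult': "nonzerodiv u \<Longrightarrow> invK u * u = 1"
  by (auto simp: invK_def nonzerodiv_def fun_eq_iff)

lemma nonzerodiv_mult: "nonzerodiv u \<Longrightarrow> nonzerodiv v \<Longrightarrow> nonzerodiv (u * (v :: 'b \<Rightarrow> 'a::field fls))"
  by (simp add: nonzerodiv_def)



lemma cyclic_image: "cyclic S v = (\<lambda>a. v * a) ` (S :: ('b \<Rightarrow> 'a::field fls) set)"
  by (auto simp: cyclic_def mult.commute)

context curve begin

lemma fgM_Rmult:
  assumes M: "fg_submodule R M" and z: "z \<in> R" and y: "y \<in> M"
  shows "z * y \<in> M"
proof -
  obtain N and g :: "nat \<Rightarrow> 'b \<Rightarrow> 'a fls" where Mdef: "M = {\<Sum>i<N. r i * g i | r. \<forall>i<N. r i \<in> R}" using M unfolding fg_submodule_def by blast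
  obtain r where r: "\<forall>i<N. r i \<in> R" "y = (\<Sum>i<N. r i * g i)" using y Mdef by auto
  have e: "z * y = (\<Sum>i<N. (z * r i) * g i)" unfolding r(2) by (simp add: sum_distrib_left mult.assoc)
  have i: "\<forall>i<N. z * r i \<in> R" using r(1) z R_mult by blast
  show ?thesis unfolding Mdef mem_Collect_eq by (rule exI[of _ "\<lambda>i. z * r i"]) (use e i in simp)
qed

lemma fgM_add:
  assumes M: "fg_submodule R M" and y: "y \<in> M" and y': "y' \<in> M"
  shows "y + y' \<in> M"
proof -
  obtain N and g :: "nat \<Rightarrow> 'b \<Rightarrow> 'a fls" where Mdef: "M = {\<Sum>i<N. r i * g i | r. \<forall>i<N. r i \<in> R}" using M unfolding fg_submodule_def by blast
  obtain r where r: "\<forall>i<N. r i \<in> R" "y = (\<Sum>i<N. r i * g i)" using y Mdef by auto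
  obtain r' where r': "\<forall>i<N. r' i \<in> R" "y' = (\<Sum>i<N. r' i * g i)" using y' Mdef by auto
  have e: "y + y' = (\<Sum>i<N. (r i + r' i) * g i)" unfolding r(2) r'(2) by (simp add: sum.distrib distrib_right)
  have i: "\<forall>i<N. r i + r' i \<in> R" using r(1) r'(1) R_add by blast
  show ?thesis unfolding Mdef mem_Collect_eq by (rule exI[of _ "\<lambda>i. r i + r' i"]) (use e i in simp)
qed

lemma fgM_zero:
  assumes M: "fg_submodule R M"
  shows "0 \<in> M"
proof -
  obtain N and g :: "nat \<Rightarrow> 'b \<Rightarrow> 'a fls" where Mdef: "M = {\<Sum>i<N. r i * g i | r. \<forall>i<N. r i \<in> R}" using M unfolding fg_submodule_def by blast
  show ?thesis unfolding Mdef mem_Collect_eq by (rule exI[of _ "\<lambda>i. 0"]) (simp add: R_zero)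
qed

lemma fgM_subspace:
  assumes M: "fg_submodule R M"
  shows "KV.subspace M"
proof (rule KV.subspaceI)
  show "0 \<in> M" by (rule fgM_zero[OF M])
next
  fix x y assume "x \<in> M" "y \<in> M" thus "x + y \<in> M" by (rule fgM_add[OF M])
next
  fix c x assume "x \<in> M" thus "kscale c x \<in> M" unfolding kscale_conv by (rule fgM_Rmult[OF M R_const])
qed

end

lemma choose_u:
  fixes z :: "'b::finite \<Rightarrow> 'a::{field, field_char_0} fls"
  assumes b0: "fls_subdegree (z b0) < 0"
  shows "\<exists>c. (\<forall>b. (1 + kscale c z) b \<noteq> 0 \<and> fls_subdegree ((1 + kscale c z) b) \<le> 0)
           \<and> fls_subdegree ((1 + kscale c z) b0) < 0"
proof -
  define bad where "bad = insert 0 (range (\<lambda>b. - inverse (z b $$ 0)))"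
  have "finite bad" by (simp add: bad_def)
  then obtain c where c: "c \<notin> bad" using ex_new_if_finite[OF infinite_UNIV_char_0] by blast
  have c0: "c \<noteq> 0" using c by (simp add: bad_def)
  let ?u = "1 + kscale c z"
  have unth: "?u b $$ j = (if j = 0 then 1 else 0) + c * z b $$ j" for b j
    by (simp add: kscale_nth)
  have neg: "?u b \<noteq> 0 \<and> fls_subdegree (?u b) < 0" if "fls_subdegree (z b) < 0" for b
  proof -
    have zb: "z b \<noteq> 0" using that by auto
    have "?u b $$ fls_subdegree (z b) = c * z b $$ fls_subdegree (z b)" using that unth by simp
    hence nz: "?u b $$ fls_subdegree (z b) \<noteq> 0" using c0 zb by simp
    hence "?u b \<noteq> 0" by (metis fls_zero_nth)
    moreover have "fls_subdegree (?u b) \<le> fls_subdegree (z b)" using nz by (rule fls_subdegree_leI)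
    ultimately show ?thesis using that by simp
  qed
  have nonneg: "?u b \<noteq> 0 \<and> fls_subdegree (?u b) \<le> 0" if "\<not> fls_subdegree (z b) < 0" for b
  proof -
    have "1 + c * z b $$ 0 \<noteq> 0"
    proof (cases "z b $$ 0 = 0")
      case True thus ?thesis by simp
    next
      case False
      show ?thesis
      proof
        assume "1 + c * z b $$ 0 = 0"
        hence "c = - inverse (z b $$ 0)" using False by (simp add: field_simps add_eq_0_iff)
        thus False using c by (simp add: bad_def)
      qed
    qed
    hence nz: "?u b $$ 0 \<noteq> 0" using unth[of b 0] by simp
    hence "?u b \<noteq> 0" by (metis fls_zero_nth)
    moreover have "fls_subdegree (?u b) \<le> 0" using nz by (rule fls_subdegree_leI)
    ultimately show ?thesis by simp
  qed
  have "\<forall>b. ?u b \<noteq> 0 \<and> fls_subdegree (?u b) \<le> 0"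
  proof
    fix b show "?u b \<noteq> 0 \<and> fls_subdegree (?u b) \<le> 0"
      using neg[of b] nonneg[of b] by (cases "fls_subdegree (z b) < 0") auto
  qed
  moreover have "fls_subdegree (?u b0) < 0" using neg[OF b0] by simp
  ultimately show ?thesis by blast
qed



theorem mainTheorem17:
  fixes X Y :: "'b::finite \<Rightarrow> 'a::{alg_closed_field, field_char_0} fps"
    and M :: "('b \<Rightarrow> 'a fls) set"
    and m :: "'b \<Rightarrow> 'a fls"
    and \<delta> :: nat
  assumes param: "\<forall>b. X b $ 0 = 0 \<and> Y b $ 0 = 0"
    and total_frac: "is_total_ring_of_fractions (curve_ring X Y)"
    and normalization: "integral_closure (curve_ring X Y) = power_series_part"
    and M_fg: "fg_submodule (curve_ring X Y) M"
    and M_rank_one: "\<exists>u\<in>M. nonzerodiv u"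
    and m_in: "m \<in> M" and m_inj: "nonzerodiv m"
    and m_dim: "quot_dim M (cyclic (curve_ring X Y) m) \<delta>"
    and \<delta>_min: "\<forall>m'\<in>M. nonzerodiv m' \<longrightarrow>
                  (\<forall>n. quot_dim M (cyclic (curve_ring X Y) m') n \<longrightarrow> \<delta> \<le> n)"
  shows "curve_ring X Y \<subseteq> {z. z * m \<in> M} \<and> {z. z * m \<in> M} \<subseteq> power_series_part"
proof -
  interpret curveF X Y by unfold_locales (use param total_frac in auto)
  let ?Rt = "power_series_part :: ('b \<Rightarrow> 'a fls) set"
  define A where "A = {z. z * m \<in> M}"
  have sM: "KV.subspace M" by (rule fgM_subspace[OF M_fg])
  have Mmult: "z * y \<in> M" if "z \<in> R" "y \<in> M" for z y by (rule fgM_Rmult[OF M_fg that])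
  have RA: "R \<subseteq> A" unfolding A_def using Mmult m_in by blast
  have Amod: "z * a \<in> A" if "z \<in> R" "a \<in> A" for z a
    using Mmult[OF that(1), of "a * m"] that(2) unfolding A_def by (simp add: mult.assoc)
  define mi where "mi = invK m"
  have mmi: "m * mi = 1" and mim: "mi * m = 1" using m_inj by (simp_all add: mi_def invK_mult invK_mult')
  have AM: "A = (\<lambda>a. mi * a) ` M"
  proof
    show "A \<subseteq> (\<lambda>a. mi * a) ` M"
    proof
      fix a assume a: "a \<in> A"
      have "a = mi * (a * m)" using mim by (simp add: mult_ac)
      moreover have "a * m \<in> M" using a by (simp add: A_def)
      ultimately show "a \<in> (\<lambda>a. mi * a) ` M" by blast
    qed
  next
    show "(\<lambda>a. mi * a) ` M \<subseteq> A"
    proof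
      fix a assume "a \<in> (\<lambda>a. mi * a) ` M"
      then obtain y where y: "y \<in> M" "a = mi * y" by blast
      have "a * m = (m * mi) * y" using y(2) by (simp add: mult_ac)
      hence "a * m = y" using mmi by simp
      thus "a \<in> A" using y(1) by (simp add: A_def)
    qed
  qed
  have MA: "M = (\<lambda>a. m * a) ` A" unfolding AM by (simp add: image_mult_cancel mmi)
  have sA: "KV.subspace A" unfolding AM by (rule subspace_mult_image[OF sM])
  have qA: "quot_dim A R \<delta>"
  proof -
    have "quot_dim ((\<lambda>a. mi * a) ` M) ((\<lambda>a. mi * a) ` cyclic R m) \<delta>"
      by (rule quot_dim_mult[OF mim m_dim])
    thus ?thesis unfolding AM[symmetric] cyclic_image image_mult_cancel[OF mim] .
  qed
  have part2: "A \<subseteq> ?Rt"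
  proof (rule subsetI, rule ccontr)
    fix z assume zA: "z \<in> A" and zRt: "z \<notin> ?Rt"
    obtain b0 where b0: "fls_subdegree (z b0) < 0" using zRt unfolding Rt_iff by (auto simp: not_le)
    obtain c where c: "\<forall>b. (1 + kscale c z) b \<noteq> 0 \<and> fls_subdegree ((1 + kscale c z) b) \<le> 0"
      "fls_subdegree ((1 + kscale c z) b0) < 0" using choose_u[of z b0, OF b0] by blast
    define u where "u = 1 + kscale c z"
    have nzu: "nonzerodiv u" using c(1) by (simp add: nonzerodiv_def u_def)
    have uA: "u \<in> A"
    proof -
      have "u * m = m + kscale c (z * m)" by (simp add: u_def distrib_right kscale_mult_left)
      moreover have "z * m \<in> M" using zA by (simp add: A_def)
      ultimately have "u * m \<in> M" using m_in sM KV.subspace_add KV.subspace_scale by metis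
      thus ?thesis by (simp add: A_def)
    qed
    define w where "w = invK u"
    have uw: "u * w = 1" and wu: "w * u = 1" using nzu by (simp_all add: w_def invK_mult invK_mult')
    have wsub: "fls_subdegree (w b) = - fls_subdegree (u b)" for b by (simp add: w_def invK_def)
    have wRt: "w \<in> ?Rt" unfolding Rt_iff using c(1) wsub by (simp add: u_def)
    have nzw: "nonzerodiv w" using nzu by (simp add: nonzerodiv_def w_def invK_def)
    define d where "d = (\<Sum>b\<in>UNIV. nat (fls_subdegree (w b)))"
    have d1: "1 \<le> d"
    proof -
      have "1 \<le> nat (fls_subdegree (w b0))" using c(2) wsub[of b0] by (simp add: u_def)
      also have "\<dots> \<le> d" unfolding d_def by (rule member_le_sum) auto
      finally show ?thesis .
    qed
    obtain g where g: "g \<in> R" "nonzerodiv g" "\<forall>y\<in>?Rt. g * y \<in> R" using conductor by blast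
    have gRt: "g \<in> ?Rt" using g(1) R_sub_Rt by blast
    have ggi: "g * invK g = 1" using g(2) by (rule invK_mult)
    define D where "D = (\<lambda>a. g * a) ` ?Rt"
    have sD: "KV.subspace D" unfolding D_def by (rule subspace_mult_image[OF Rt_subspace])
    have DR: "D \<subseteq> R" unfolding D_def using g(3) by blast
    have F1: "quot_dim ?Rt D (\<Sum>b\<in>UNIV. nat (fls_subdegree (g b)))" unfolding D_def
      by (rule quot_dim_Rt_mult[OF gRt g(2)])
    obtain e k0 where qRD: "quot_dim R D e" and "quot_dim ?Rt R k0"
      using quot_dim_split[OF Rt_subspace R_subspace sD DR R_sub_Rt F1] by blast
    have qAD: "quot_dim A D (\<delta> + e)" by (rule quot_dim_compose[OF R_subspace sD DR RA qA qRD])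
    define B where "B = (\<lambda>a. w * a) ` A"
    define D' where "D' = (\<lambda>a. w * a) ` D"
    have sB: "KV.subspace B" unfolding B_def by (rule subspace_mult_image[OF sA])
    have sD': "KV.subspace D'" unfolding D'_def by (rule subspace_mult_image[OF sD])
    have qBD': "quot_dim B D' (\<delta> + e)" unfolding B_def D'_def by (rule quot_dim_mult[OF wu qAD])
    have F2: "quot_dim ?Rt ((\<lambda>a. w * a) ` ?Rt) d" unfolding d_def by (rule quot_dim_Rt_mult[OF wRt nzw])
    have D'eq: "D' = (\<lambda>a. g * a) ` ((\<lambda>a. w * a) ` ?Rt)"
      unfolding D'_def D_def image_mult_mult by (simp add: mult.commute)
    have F3: "quot_dim D D' d" unfolding D'eq D_def by (rule quot_dim_mult[OF ggi F2])
    have RB: "R \<subseteq> B"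
    proof
      fix r assume r: "r \<in> R"
      have "r * u \<in> A" using Amod[OF r uA] .
      moreover have "r = w * (r * u)" using wu by (simp add: mult_ac)
      ultimately show "r \<in> B" unfolding B_def by blast
    qed
    have DB: "D \<subseteq> B" using DR RB by blast
    have D'D: "D' \<subseteq> D" unfolding D'eq D_def using wRt Rt_mult by blast
    obtain q k where qBD: "quot_dim B D q" and qDD': "quot_dim D D' k" and qk: "q + k = \<delta> + e"
      using quot_dim_split[OF sB sD sD' D'D DB qBD'] by blast
    have kd: "k = d" using quot_dim_unique[OF sD' qDD' F3] .
    obtain n e' where qBR: "quot_dim B R n" and qRD': "quot_dim R D e'" and ne: "n + e' = q"
      using quot_dim_split[OF sB R_subspace sD DR RB qBD] by blast
    have ee: "e' = e" using quot_dim_unique[OF sD qRD' qRD] .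
    have nlt: "n < \<delta>" using qk kd ne ee d1 by simp
    have "quot_dim ((\<lambda>a. u * a) ` B) ((\<lambda>a. u * a) ` R) n" by (rule quot_dim_mult[OF uw qBR])
    hence qAuR: "quot_dim A ((\<lambda>a. u * a) ` R) n" unfolding B_def image_mult_cancel[OF uw] .
    have "quot_dim ((\<lambda>a. m * a) ` A) ((\<lambda>a. m * a) ` ((\<lambda>a. u * a) ` R)) n"
      by (rule quot_dim_mult[OF mmi qAuR])
    hence qM: "quot_dim M (cyclic R (u * m)) n"
      unfolding MA[symmetric] image_mult_mult cyclic_image by (simp add: mult.commute)
    have umM: "u * m \<in> M" using uA by (simp add: A_def)
    have "nonzerodiv (u * m)" by (rule nonzerodiv_mult[OF nzu m_inj])
    hence "\<delta> \<le> n" using \<delta>_min umM qM by blast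
    thus False using nlt by simp
  qed
  show ?thesis using RA part2 unfolding A_def by blast
qed


end
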